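(* Under the standing assumptions, assume $n> m$ and that all kept singular values $S_{kk}$ are strictly positive. Set $\widetilde{dU}_2:=(\mathbb{1}_n-UU^\dagger)dU$ and $\widetilde{dV}_2:=(\mathbb{1}_m-VV^\dagger)dV$. Then $\widetilde{dV}_2$ satisfies the Sylvester equation $$\widetilde{dV}_2\,S^2-A^\dagger A\,\widetilde{dV}_2=(\mathbb{1}_m-VV^\dagger)\,dA^\dagger U S+A^\dagger(\mathbb{1}_n-UU^\dagger)\,dA\,V,$$ and $$\widetilde{dU}_2=(\mathbb{1}_n-UU^\dagger)\,dA\,V S^{-1}+A\,\widetilde{dV}_2\,S^{-1}.$$
   Context: Let $n,m\ge1$, $r=\min(n,m)$ and $1\le t<r$. Let $\tau\mapsto A(\tau)\in\mathbb{C}^{n\times m}$ be differentiable, and suppose there are differentiable maps $\tau\mapsto U\in\mathbb{C}^{n\times t}$, $S\in\mathbb{R}^{t\times t}$, $V\in\mathbb{C}^{m\times t}$, $U_\perp\in\mathbb{C}^{n\times(r-t)}$, $S_\perp\in\mathbb{R}^{(r-t)\times(r-t)}$, $V_\perp\in\mathbb{C}^{m\times(r-t)}$ such that for every $\tau$: $A=USV^\dagger+U_\perp S_\perp V_\perp^\dagger$ is a (thin) singular value decomposition, i.e. $S,S_\perp$ are diagonal with nonnegative entries, $(U\,|\,U_\perp)$ and $(V\,|\,V_\perp)$ have orthonormal columns. Here $d$ denotes the derivative with respect to $\tau$, $^\dagger$ the conjugate transpose, $\mathbb{1}_k$ the $k\times k$ identity. *)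

theory Defs
  imports "HOL-Analysis.Analysis"
begin

definition cadj :: "complex^'c^'r \<Rightarrow> complex^'r^'c" where
  "cadj M = (\<chi> i j. cnj (M $ j $ i))"

definition cmat :: "real^'c^'r \<Rightarrow> complex^'c^'r" where
  "cmat M = (\<chi> i j. complex_of_real (M $ i $ j))"

definition nonneg_diag :: "real^'k^'k \<Rightarrow> bool" where
  "nonneg_diag M \<longleftrightarrow> (\<forall>i j. i \<noteq> j \<longrightarrow> M $ i $ j = 0) \<and> (\<forall>i. M $ i $ i \<ge> 0)"

end

theory Submission imports Defs begin


lemma mm_add_r: "((A::'a::semiring_1^'n^'m) + B) ** C = A ** C + B ** C"
  by (vector matrix_matrix_mult_def sum.distrib[symmetric] field_simps)
lemma mm_sub_l: "(A::'a::ring_1^'n^'m) ** (B - C) = A ** B - A ** C"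
  by (vector matrix_matrix_mult_def sum_subtractf[symmetric] field_simps)
lemma mm_sub_r: "((A::'a::ring_1^'n^'m) - B) ** C = A ** C - B ** C"
  by (vector matrix_matrix_mult_def sum_subtractf[symmetric] field_simps)
lemma mm_scale_l: "(r *\<^sub>R (A::complex^'n^'m)) ** B = r *\<^sub>R (A ** B)"
  by (vector matrix_matrix_mult_def scaleR_conv_of_real sum_distrib_left mult.assoc)
lemma mm_scale_r: "(A::complex^'n^'m) ** (r *\<^sub>R B) = r *\<^sub>R (A ** B)"
  by (vector matrix_matrix_mult_def scaleR_conv_of_real sum_distrib_left mult.assoc mult.left_commute)

lemma bb_mm: "bounded_bilinear ((**) :: complex^'b^'a \<Rightarrow> complex^'c^'b \<Rightarrow> complex^'c^'a)"
  apply (rule bilinear_conv_bounded_bilinear[THEN iffD1])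
  unfolding bilinear_def
  by (auto intro!: linearI simp: matrix_add_ldistrib mm_add_r mm_scale_l mm_scale_r)

lemma vd_mm:
  fixes f :: "real \<Rightarrow> complex^'b^'a" and g :: "real \<Rightarrow> complex^'c^'b"
  assumes "(f has_vector_derivative f') (at x)" "(g has_vector_derivative g') (at x)"
  shows "((\<lambda>x. f x ** g x) has_vector_derivative (f x ** g' + f' ** g x)) (at x)"
  using bounded_bilinear.has_vector_derivative[OF bb_mm assms] by simp

lemma bl_cadj: "bounded_linear (cadj :: complex^'c^'r \<Rightarrow> complex^'r^'c)"
  apply (rule linear_conv_bounded_linear[THEN iffD1])
  by (rule linearI) (vector cadj_def scaleR_conv_of_real)+

lemma bl_cmat: "bounded_linear (cmat :: real^'c^'r \<Rightarrow> complex^'c^'r)"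
  apply (rule linear_conv_bounded_linear[THEN iffD1])
  by (rule linearI) (vector cmat_def scaleR_conv_of_real)+

lemma cadj_mm: "cadj ((A::complex^'b^'a) ** B) = cadj B ** cadj A"
  by (vector cadj_def matrix_matrix_mult_def mult.commute)
lemma cadj_cadj[simp]: "cadj (cadj A) = A"
  by (vector cadj_def)
lemma cadj_add: "cadj (A + B) = cadj A + cadj B"
  by (vector cadj_def)
lemma cadj_0[simp]: "cadj 0 = 0"
  by (vector cadj_def)
lemma cadj_cmat: "nonneg_diag M \<Longrightarrow> cadj (cmat M) = cmat M"
  unfolding nonneg_diag_def by (vector cadj_def cmat_def) (metis)



lemma diag_mul:
  assumes "\<And>i k. i \<noteq> k \<Longrightarrow> D $ i $ k = 0"
  shows "cmat D ** (M::complex^'c^'k) = (\<chi> i j. complex_of_real (D $ i $ i) * M $ i $ j)"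
proof -
  have e: "(\<Sum>k\<in>UNIV. complex_of_real (D $ i $ k) * M $ k $ j) = complex_of_real (D $ i $ i) * M $ i $ j" for i j
  proof -
    have "(\<Sum>k\<in>UNIV. complex_of_real (D $ i $ k) * M $ k $ j) = (\<Sum>k\<in>{i}. complex_of_real (D $ i $ k) * M $ k $ j)"
      by (rule sum.mono_neutral_right) (use assms in auto)
    thus ?thesis by simp
  qed
  show ?thesis
    unfolding matrix_matrix_mult_def cmat_def
    by (simp add: vec_eq_iff e)
qed

lemma diag_inv:
  fixes S :: "real^'t^'t"
  assumes Sd: "\<And>i k. i \<noteq> k \<Longrightarrow> S $ i $ k = 0" and Spos: "\<And>k. S $ k $ k > 0"
  shows "cmat S ** matrix_inv (cmat S) = mat 1"
proof -
  define Si :: "real^'t^'t" where "Si = (\<chi> i j. if i = j then 1 / S $ i $ i else 0)"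
  have nz: "\<And>k. S $ k $ k \<noteq> 0" using Spos by (metis less_irrefl)
  have Sid: "\<And>i k. i \<noteq> k \<Longrightarrow> Si $ i $ k = 0" unfolding Si_def by simp
  have 1: "cmat S ** cmat Si = mat 1"
    by (subst diag_mul[OF Sd]) (simp_all add: vec_eq_iff mat_def cmat_def nz Si_def Sd Sid)
  have 2: "cmat Si ** cmat S = mat 1"
    by (subst diag_mul[OF Sid]) (simp_all add: vec_eq_iff mat_def cmat_def nz Si_def Sd Sid)
  have "cmat S ** matrix_inv (cmat S) = mat 1 \<and> matrix_inv (cmat S) ** cmat S = mat 1"
    unfolding matrix_inv_def by (rule someI[of _ "cmat Si"]) (simp add: 1 2)
  thus ?thesis by simp
qed

theorem mainTheorem8:
  fixes A :: "real \<Rightarrow> complex^'m^'n"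
    and U :: "real \<Rightarrow> complex^'t^'n" and S :: "real \<Rightarrow> real^'t^'t" and V :: "real \<Rightarrow> complex^'t^'m"
    and Up :: "real \<Rightarrow> complex^'s^'n" and Sp :: "real \<Rightarrow> real^'s^'s" and Vp :: "real \<Rightarrow> complex^'s^'m"
  assumes dims: "CARD('t) + CARD('s) = min CARD('n) CARD('m)"
    and nm: "CARD('n) > CARD('m)"
    and diff: "\<And>\<tau>. A differentiable (at \<tau>)" "\<And>\<tau>. U differentiable (at \<tau>)"
      "\<And>\<tau>. S differentiable (at \<tau>)" "\<And>\<tau>. V differentiable (at \<tau>)"
      "\<And>\<tau>. Up differentiable (at \<tau>)" "\<And>\<tau>. Sp differentiable (at \<tau>)"
      "\<And>\<tau>. Vp differentiable (at \<tau>)"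
    and svd: "\<And>\<tau>. A \<tau> = U \<tau> ** cmat (S \<tau>) ** cadj (V \<tau>) + Up \<tau> ** cmat (Sp \<tau>) ** cadj (Vp \<tau>)"
    and diagS: "\<And>\<tau>. nonneg_diag (S \<tau>)" and diagSp: "\<And>\<tau>. nonneg_diag (Sp \<tau>)"
    and orthU: "\<And>\<tau>. cadj (U \<tau>) ** U \<tau> = mat 1" "\<And>\<tau>. cadj (Up \<tau>) ** Up \<tau> = mat 1"
      "\<And>\<tau>. cadj (U \<tau>) ** Up \<tau> = 0"
    and orthV: "\<And>\<tau>. cadj (V \<tau>) ** V \<tau> = mat 1" "\<And>\<tau>. cadj (Vp \<tau>) ** Vp \<tau> = mat 1"
      "\<And>\<tau>. cadj (V \<tau>) ** Vp \<tau> = 0"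
    and Spos: "\<And>\<tau> k. S \<tau> $ k $ k > 0"
  shows "\<forall>\<tau>.
    (let dA = vector_derivative A (at \<tau>); dU = vector_derivative U (at \<tau>);
         dV = vector_derivative V (at \<tau>);
         Sc = cmat (S \<tau>); Sinv = matrix_inv (cmat (S \<tau>));
         PU = (mat 1 :: complex^'n^'n) - U \<tau> ** cadj (U \<tau>);
         PV = (mat 1 :: complex^'m^'m) - V \<tau> ** cadj (V \<tau>);
         dU2 = PU ** dU; dV2 = PV ** dV
     in dV2 ** (Sc ** Sc) - cadj (A \<tau>) ** A \<tau> ** dV2
          = PV ** cadj dA ** U \<tau> ** Sc + cadj (A \<tau>) ** PU ** dA ** V \<tau>
      \<and> dU2 = PU ** dA ** V \<tau> ** Sinv + A \<tau> ** dV2 ** Sinv)"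
  proof (intro allI)
  fix \<tau>
  have vpv: "\<And>x. cadj (Vp x) ** V x = 0"
    by (metis cadj_mm cadj_cadj cadj_0 orthV(3))
  have upu: "\<And>x. cadj (Up x) ** U x = 0"
    by (metis cadj_mm cadj_cadj cadj_0 orthU(3))
  have AV: "\<And>x. A x ** V x = U x ** cmat (S x)"
    by (simp add: svd mm_add_r matrix_mul_assoc[symmetric] orthV vpv)
  have cadjA: "\<And>x. cadj (A x) = V x ** cmat (S x) ** cadj (U x) + Vp x ** cmat (Sp x) ** cadj (Up x)"
    by (simp add: svd cadj_add cadj_mm cadj_cmat diagS diagSp matrix_mul_assoc)
  have AU: "\<And>x. cadj (A x) ** U x = V x ** cmat (S x)"
    by (simp add: cadjA mm_add_r matrix_mul_assoc[symmetric] orthU upu)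
  define dA where "dA = vector_derivative A (at \<tau>)"
  define dU where "dU = vector_derivative U (at \<tau>)"
  define dV where "dV = vector_derivative V (at \<tau>)"
  define dS where "dS = vector_derivative S (at \<tau>)"
  have dAd: "(A has_vector_derivative dA) (at \<tau>)" unfolding dA_def using diff(1) vector_derivative_works by blast
  have dUd: "(U has_vector_derivative dU) (at \<tau>)" unfolding dU_def using diff(2) vector_derivative_works by blast
  have dSd: "(S has_vector_derivative dS) (at \<tau>)" unfolding dS_def using diff(3) vector_derivative_works by blast
  have dVd: "(V has_vector_derivative dV) (at \<tau>)" unfolding dV_def using diff(4) vector_derivative_works by blast
  have dScd: "((\<lambda>x. cmat (S x)) has_vector_derivative cmat dS) (at \<tau>)"
    using bounded_linear.has_vector_derivative[OF bl_cmat dSd] .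
  have dAcd: "((\<lambda>x. cadj (A x)) has_vector_derivative cadj dA) (at \<tau>)"
    using bounded_linear.has_vector_derivative[OF bl_cadj dAd] .
  have E1: "A \<tau> ** dV + dA ** V \<tau> = U \<tau> ** cmat dS + dU ** cmat (S \<tau>)"
  proof (rule vector_derivative_unique_at)
    show "((\<lambda>x. A x ** V x) has_vector_derivative (A \<tau> ** dV + dA ** V \<tau>)) (at \<tau>)"
      using vd_mm[OF dAd dVd] .
    show "((\<lambda>x. A x ** V x) has_vector_derivative (U \<tau> ** cmat dS + dU ** cmat (S \<tau>))) (at \<tau>)"
      unfolding AV using vd_mm[OF dUd dScd] .
  qed
  have E2: "cadj (A \<tau>) ** dU + cadj dA ** U \<tau> = V \<tau> ** cmat dS + dV ** cmat (S \<tau>)"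
  proof (rule vector_derivative_unique_at)
    show "((\<lambda>x. cadj (A x) ** U x) has_vector_derivative (cadj (A \<tau>) ** dU + cadj dA ** U \<tau>)) (at \<tau>)"
      using vd_mm[OF dAcd dUd] .
    show "((\<lambda>x. cadj (A x) ** U x) has_vector_derivative (V \<tau> ** cmat dS + dV ** cmat (S \<tau>))) (at \<tau>)"
      unfolding AU using vd_mm[OF dVd dScd] .
  qed
  define sc where "sc = cmat (S \<tau>)"
  define a where "a = A \<tau>"
  define u where "u = U \<tau>"
  define v where "v = V \<tau>"
  define PU where "PU = (mat 1 :: complex^'n^'n) - u ** cadj u"
  define PV where "PV = (mat 1 :: complex^'m^'m) - v ** cadj v"
  have sca: "cadj sc = sc" unfolding sc_def by (simp add: cadj_cmat diagS)
  have PUu: "PU ** u = 0" unfolding PU_def u_def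
    by (simp add: mm_sub_r matrix_mul_assoc[symmetric] orthU)
  have PVv: "PV ** v = 0" unfolding PV_def v_def
    by (simp add: mm_sub_r matrix_mul_assoc[symmetric] orthV)
  have ua: "cadj u ** a = sc ** cadj v"
    by (metis AU cadj_mm cadj_cadj sca a_def u_def v_def sc_def)
  have va: "cadj v ** cadj a = sc ** cadj u"
    by (metis AV cadj_mm sca a_def u_def v_def sc_def)
  have PUa: "PU ** a = a ** PV"
  proof -
    have "PU ** a = a - u ** (sc ** cadj v)"
      unfolding PU_def by (simp add: mm_sub_r matrix_mul_assoc[symmetric] ua)
    also have "... = a ** PV"
      unfolding PV_def using AV[of \<tau>]
      by (simp add: mm_sub_l matrix_mul_assoc a_def u_def v_def sc_def)
    finally show ?thesis .
  qed
  have PVa: "PV ** cadj a = cadj a ** PU"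
  proof -
    have "PV ** cadj a = cadj a - v ** (sc ** cadj u)"
      unfolding PV_def by (simp add: mm_sub_r matrix_mul_assoc[symmetric] va)
    also have "... = cadj a ** PU"
      unfolding PU_def using AU[of \<tau>]
      by (simp add: mm_sub_l matrix_mul_assoc a_def u_def v_def sc_def)
    finally show ?thesis .
  qed
  have F1: "PU ** dU ** sc = PU ** dA ** v + a ** (PV ** dV)"
  proof -
    have "PU ** (a ** dV + dA ** v) = PU ** (u ** cmat dS + dU ** sc)"
      using E1 by (simp add: a_def u_def v_def sc_def)
    thus ?thesis
      by (simp add: matrix_add_ldistrib matrix_mul_assoc PUu PUa add.commute)
  qed
  have F2: "PV ** dV ** sc = PV ** cadj dA ** u + cadj a ** (PU ** dU)"
  proof -
    have "PV ** (cadj a ** dU + cadj dA ** u) = PV ** (v ** cmat dS + dV ** sc)"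
      using E2 by (simp add: a_def u_def v_def sc_def)
    thus ?thesis
      by (simp add: matrix_add_ldistrib matrix_mul_assoc PVv PVa add.commute)
  qed
  have inv: "sc ** matrix_inv sc = mat 1"
    unfolding sc_def
    by (rule diag_inv) (use diagS[of \<tau>] Spos[of \<tau>] in \<open>auto simp: nonneg_diag_def\<close>)
  have G2: "PU ** dU = PU ** dA ** v ** matrix_inv sc + a ** (PV ** dV) ** matrix_inv sc"
  proof -
    have "PU ** dU = PU ** dU ** sc ** matrix_inv sc"
      by (simp add: matrix_mul_assoc[symmetric] inv)
    also have "... = PU ** dA ** v ** matrix_inv sc + a ** (PV ** dV) ** matrix_inv sc"
      unfolding F1 by (simp add: mm_add_r)
    finally show ?thesis .
  qed
  have G1: "PV ** dV ** (sc ** sc) - cadj a ** a ** (PV ** dV)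
       = PV ** cadj dA ** u ** sc + cadj a ** PU ** dA ** v"
  proof -
    have "PV ** dV ** (sc ** sc) = (PV ** cadj dA ** u + cadj a ** (PU ** dU)) ** sc"
      by (metis F2 matrix_mul_assoc)
    also have "... = PV ** cadj dA ** u ** sc + cadj a ** (PU ** dU ** sc)"
      by (simp add: mm_add_r matrix_mul_assoc)
    also have "... = PV ** cadj dA ** u ** sc + cadj a ** PU ** dA ** v + cadj a ** a ** (PV ** dV)"
      unfolding F1 by (simp add: matrix_add_ldistrib matrix_mul_assoc add.assoc)
    finally show ?thesis by simp
  qed
  show "let dA = vector_derivative A (at \<tau>); dU = vector_derivative U (at \<tau>);
         dV = vector_derivative V (at \<tau>);
         Sc = cmat (S \<tau>); Sinv = matrix_inv (cmat (S \<tau>));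
         PU = (mat 1 :: complex^'n^'n) - U \<tau> ** cadj (U \<tau>);
         PV = (mat 1 :: complex^'m^'m) - V \<tau> ** cadj (V \<tau>);
         dU2 = PU ** dU; dV2 = PV ** dV
     in dV2 ** (Sc ** Sc) - cadj (A \<tau>) ** A \<tau> ** dV2
          = PV ** cadj dA ** U \<tau> ** Sc + cadj (A \<tau>) ** PU ** dA ** V \<tau>
      \<and> dU2 = PU ** dA ** V \<tau> ** Sinv + A \<tau> ** dV2 ** Sinv"
    unfolding Let_def using G1 G2
    by (simp add: dA_def[symmetric] dU_def[symmetric] dV_def[symmetric] PU_def PV_def a_def u_def v_def sc_def)
qed

end
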